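(* Let $\widehat{\mathscr{O}}$ be a commutative local principal ideal ring, complete with respect to its unique maximal ideal $\mathfrak{m}$, with residue field $k$ of characteristic not equal to $2$. Let $A\in\mathrm{M}_n(\widehat{\mathscr{O}})$ be cyclic, and let $F\in\widehat{\mathscr{O}}[t]$ be a monic polynomial of degree $d$, with reduction $\overline{F}\in k[t]$ and formal derivative $F'$. Suppose there is $\widetilde{B}\in\mathrm{M}_n(k)$ such that $\overline{F}(\widetilde{B})=\overline{A}$ and $\overline{F}'(\widetilde{B})\in\mathrm{GL}_n(k)$. Then there exists $B\in\mathrm{M}_n(\widehat{\mathscr{O}})$ such that $\overline{B}=\widetilde{B}$ and $F(B)=A$.
   Context: Bars denote reduction modulo $\mathfrak m$ (entrywise for matrices, coefficientwise for polynomials). $A\in\mathrm{M}_n(\widehat{\mathscr O})$ is called cyclic if $\overline{A}\in\mathrm{M}_n(k)$ is cyclic, i.e. $k^n$ is a cyclic $k[t]$-module via $\overline A$. Completeness means $\widehat{\mathscr O}\to\varprojlim_j\widehat{\mathscr O}/\mathfrak m^j$ is an isomorphism. *)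

theory Defs
  imports "HOL-Analysis.Analysis" "HOL-Computational_Algebra.Polynomial"
begin

definition is_ideal :: "'a::comm_ring_1 set \<Rightarrow> bool" where
  "is_ideal I \<longleftrightarrow> 0 \<in> I \<and> (\<forall>x\<in>I. \<forall>y\<in>I. x + y \<in> I) \<and> (\<forall>r. \<forall>x\<in>I. r * x \<in> I)"

definition maximal_ideal :: "'a::comm_ring_1 set \<Rightarrow> bool" where
  "maximal_ideal I \<longleftrightarrow> is_ideal I \<and> I \<noteq> UNIV \<and>
     (\<forall>J. is_ideal J \<and> I \<subseteq> J \<and> J \<noteq> UNIV \<longrightarrow> J = I)"

definition local_ring_with :: "'a::comm_ring_1 set \<Rightarrow> bool" where
  "local_ring_with m \<longleftrightarrow> (\<forall>I. maximal_ideal I \<longleftrightarrow> I = m)"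

definition principal_ideal_ring :: "'a::comm_ring_1 itself \<Rightarrow> bool" where
  "principal_ideal_ring _ \<longleftrightarrow> (\<forall>I::'a set. is_ideal I \<longrightarrow> (\<exists>g. I = {r * g | r. True}))"

fun ideal_pow :: "'a::comm_ring_1 set \<Rightarrow> nat \<Rightarrow> 'a set" where
  "ideal_pow I 0 = UNIV"
| "ideal_pow I (Suc j) = {x. \<exists>(S::nat set) f g. finite S \<and> (\<forall>i\<in>S. f i \<in> I \<and> g i \<in> ideal_pow I j)
                                  \<and> x = (\<Sum>i\<in>S. f i * g i)}"

(* completeness: R \<rightarrow> lim_j R/m^j is bijective (injective and surjective),
   elements of the inverse limit being represented by compatible sequences *)
definition complete_wrt :: "'a::comm_ring_1 set \<Rightarrow> bool" where
  "complete_wrt m \<longleftrightarrow>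
     (\<forall>x. (\<forall>j. x \<in> ideal_pow m j) \<longrightarrow> x = 0) \<and>
     (\<forall>s::nat \<Rightarrow> 'a. (\<forall>j. s (Suc j) - s j \<in> ideal_pow m j) \<longrightarrow>
        (\<exists>y. \<forall>j. y - s j \<in> ideal_pow m j))"

definition mat_pow :: "'a::semiring_1^'n^'n \<Rightarrow> nat \<Rightarrow> 'a^'n^'n" where
  "mat_pow B i = (((**) B) ^^ i) (mat 1)"

definition poly_mat :: "'a::comm_ring_1 poly \<Rightarrow> 'a^'n^'n \<Rightarrow> 'a^'n^'n" where
  "poly_mat p B = (\<Sum>i\<le>degree p. mat (coeff p i) ** mat_pow B i)"

definition map_mat :: "('a \<Rightarrow> 'b) \<Rightarrow> 'a^'n^'m \<Rightarrow> 'b^'n^'m" where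
  "map_mat f A = (\<chi> i j. f (A $ i $ j))"

definition cyclic_mat :: "'k::field^'n^'n \<Rightarrow> bool" where
  "cyclic_mat M \<longleftrightarrow> (\<exists>v::'k^'n. \<forall>w. \<exists>p. w = poly_mat p M *v v)"

end

theory Submission
  imports Defs
begin


lemma mat_pow_0[simp]: "mat_pow B 0 = mat 1" by (simp add: mat_pow_def)
lemma mat_pow_Suc: "mat_pow B (Suc i) = B ** mat_pow B i" by (simp add: mat_pow_def)

lemma mat_mult_sum: "(M::'a::semiring_1^'n^'n) ** sum f S = (\<Sum>i\<in>S. M ** f i)"
proof (cases "finite S")
  case True then show ?thesis
    by (induction S rule: finite_induct) (auto simp: matrix_add_ldistrib)
qed simp

lemma mat_mult_nth: "(mat (c::'a::comm_ring_1) ** (X::'a^'n^'m)) $ i $ j = c * X $ i $ j"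
  unfolding matrix_matrix_mult_def mat_def
  by (auto simp: if_distrib if_distribR sum.delta[OF finite] cong: if_cong)

lemma mult_mat_nth: "((X::'a::comm_ring_1^'n^'m) ** mat c) $ i $ j = X $ i $ j * c"
  unfolding matrix_matrix_mult_def mat_def
  by (auto simp: if_distrib if_distribR sum.delta'[OF finite] cong: if_cong)

lemma mat_mat_comm: "mat (c::'a::comm_ring_1) ** (X::'a^'n^'n) = X ** mat c"
  by (simp add: vec_eq_iff mat_mult_nth mult_mat_nth mult.commute)

lemma mat_mat_mult: "mat (a::'a::comm_ring_1) ** (mat b :: 'a^'n^'n) = mat (a*b)"
  by (simp add: vec_eq_iff mat_mult_nth) (simp add: mat_def)

lemma mat_add: "mat (a::'a::comm_ring_1) + (mat b :: 'a^'n^'n) = mat (a+b)"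
  by (simp add: mat_def vec_eq_iff)

lemma matrix_add_rdistrib': "((B::'a::semiring_1^'n^'n) + C) ** A = B ** A + C ** A"
  by (simp add: matrix_matrix_mult_def vec_eq_iff distrib_right sum.distrib)

lemma mat_comm_assoc: "mat c ** ((M::'a::comm_ring_1^'n^'n) ** X) = M ** (mat c ** X)"
proof -
  have "mat c ** (M ** X) = (mat c ** M) ** X" by (rule matrix_mul_assoc)
  also have "\<dots> = (M ** mat c) ** X" by (simp only: mat_mat_comm)
  also have "\<dots> = M ** (mat c ** X)" by (rule matrix_mul_assoc[symmetric])
  finally show ?thesis .
qed

lemma poly_mat_sum:
  assumes "degree p \<le> N"
  shows "poly_mat p (M::'a::comm_ring_1^'n^'n) = (\<Sum>i\<le>N. mat (coeff p i) ** mat_pow M i)"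
proof -
  have "(\<Sum>i\<le>N. mat (coeff p i) ** mat_pow M i) = (\<Sum>i\<le>degree p. mat (coeff p i) ** mat_pow M i)"
    using assms
    by (intro sum.mono_neutral_right) (auto simp: coeff_eq_0)
  then show ?thesis by (simp add: poly_mat_def)
qed

lemma poly_mat_pCons:
  "poly_mat (pCons a p) (M::'a::comm_ring_1^'n^'n) = mat a + M ** poly_mat p M"
proof -
  have d: "degree (pCons a p) \<le> Suc (degree p)" by (simp add: degree_pCons_le)
  have "poly_mat (pCons a p) M = (\<Sum>i\<le>Suc (degree p). mat (coeff (pCons a p) i) ** mat_pow M i)"
    by (rule poly_mat_sum[OF d])
  also have "\<dots> = mat a + (\<Sum>i\<le>degree p. mat (coeff p i) ** (M ** mat_pow M i))"
    by (subst sum.atMost_Suc_shift) (simp add: mat_pow_Suc)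
  also have "\<dots> = mat a + M ** poly_mat p M"
    by (simp add: poly_mat_def mat_mult_sum mat_comm_assoc)
  finally show ?thesis .
qed

lemma poly_mat_0[simp]: "poly_mat 0 (M::'a::comm_ring_1^'n^'n) = 0"
  by (simp add: poly_mat_def)

lemma poly_mat_const: "poly_mat [:a:] (M::'a::comm_ring_1^'n^'n) = mat a"
  by (simp add: poly_mat_pCons)

lemma poly_mat_add: "poly_mat (p + q) (M::'a::comm_ring_1^'n^'n) = poly_mat p M + poly_mat q M"
proof (induction p arbitrary: q)
  case 0 then show ?case by simp
next
  case (pCons a p)
  show ?case
  proof (cases q rule: pCons_cases)
    case (pCons b q')
    then show ?thesis using pCons.IH[of q']
      by (simp add: poly_mat_pCons matrix_add_ldistrib mat_add[symmetric] add_ac)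
  qed
qed

lemma poly_mat_minus: "poly_mat (- p) (M::'a::comm_ring_1^'n^'n) = - poly_mat p M"
proof -
  have "poly_mat p M + poly_mat (-p) M = 0" using poly_mat_add[of p "-p" M] by simp
  then show ?thesis by (simp add: minus_unique)
qed

lemma poly_mat_diff: "poly_mat (p - q) (M::'a::comm_ring_1^'n^'n) = poly_mat p M - poly_mat q M"
  using poly_mat_add[of p "-q" M] by (simp add: poly_mat_minus)

lemma poly_mat_smult: "poly_mat (smult a p) (M::'a::comm_ring_1^'n^'n) = mat a ** poly_mat p M"
proof (induction p)
  case 0 then show ?case by simp
next
  case (pCons b p)
  then show ?case
    by (simp add: poly_mat_pCons matrix_add_ldistrib mat_mat_mult mat_comm_assoc)
qed

lemma poly_mat_mult: "poly_mat (p * q) (M::'a::comm_ring_1^'n^'n) = poly_mat p M ** poly_mat q M"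
proof (induction p)
  case 0 then show ?case by simp
next
  case (pCons a p)
  have "poly_mat (pCons 0 (p * q)) M = M ** poly_mat (p*q) M" by (simp add: poly_mat_pCons)
  then show ?case using pCons
    by (simp add: poly_mat_pCons poly_mat_add poly_mat_smult matrix_add_rdistrib' matrix_mul_assoc)
qed

lemma poly_mat_one: "poly_mat 1 (M::'a::comm_ring_1^'n^'n) = mat 1"
  by (simp add: one_pCons poly_mat_pCons)

lemma poly_mat_X: "poly_mat [:0,1:] (M::'a::comm_ring_1^'n^'n) = M"
  by (simp add: poly_mat_pCons)

lemma poly_mat_comm: "poly_mat p (M::'a::comm_ring_1^'n^'n) ** poly_mat q M = poly_mat q M ** poly_mat p M"
  by (simp only: poly_mat_mult[symmetric] mult.commute)

lemma poly_mat_comm_M: "poly_mat p (M::'a::comm_ring_1^'n^'n) ** M = M ** poly_mat p M"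
  using poly_mat_comm[of p M "[:0,1:]"] by (simp only: poly_mat_X)

lemma poly_mat_pcompose: "poly_mat (pcompose F g) (M::'a::comm_ring_1^'n^'n) = poly_mat F (poly_mat g M)"
proof (induction F)
  case 0 then show ?case by simp
next
  case (pCons a p)
  then show ?case
    by (simp add: pcompose_pCons poly_mat_add poly_mat_const poly_mat_mult poly_mat_pCons)
qed

lemma commute_poly_mat:
  assumes "Y ** M = M ** (Y::'a::comm_ring_1^'n^'n)"
  shows "Y ** poly_mat p M = poly_mat p M ** Y"
proof (induction p)
  case 0 then show ?case by simp
next
  case (pCons a p)
  have "Y ** (M ** poly_mat p M) = M ** poly_mat p M ** Y"
  proof -
    have "Y ** (M ** poly_mat p M) = (Y ** M) ** poly_mat p M" by (rule matrix_mul_assoc)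
    also have "\<dots> = M ** (Y ** poly_mat p M)" by (simp add: assms matrix_mul_assoc)
    also have "\<dots> = M ** poly_mat p M ** Y" by (simp add: pCons.IH matrix_mul_assoc)
    finally show ?thesis .
  qed
  moreover have "Y ** mat a = mat a ** Y" by (simp add: mat_mat_comm)
  ultimately show ?case
    by (simp add: poly_mat_pCons matrix_add_ldistrib matrix_add_rdistrib')
qed

lemma centralizer_cyclic:
  assumes "cyclic_mat (M::'k::field^'n^'n)" and "Y ** M = M ** Y"
  shows "\<exists>p. Y = poly_mat p M"
proof -
  obtain v where v: "\<forall>w. \<exists>p. w = poly_mat p M *v v" using assms(1) unfolding cyclic_mat_def by blast
  then obtain p where p: "Y *v v = poly_mat p M *v v" by blast
  have "Y *v w = poly_mat p M *v w" for w
  proof -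
    obtain r where r: "w = poly_mat r M *v v" using v by blast
    have "Y *v w = (Y ** poly_mat r M) *v v" by (simp add: r matrix_vector_mul_assoc)
    also have "\<dots> = poly_mat r M *v (Y *v v)"
      by (simp add: commute_poly_mat[OF assms(2)] matrix_vector_mul_assoc)
    also have "\<dots> = (poly_mat r M ** poly_mat p M) *v v" by (simp add: p matrix_vector_mul_assoc)
    also have "\<dots> = poly_mat p M *v w" by (simp add: r poly_mat_comm matrix_vector_mul_assoc)
    finally show ?thesis .
  qed
  then have "Y = poly_mat p M" by (simp add: matrix_eq)
  then show ?thesis by blast
qed



lemma matrix_diff_ldistrib: "(X::'a::comm_ring_1^'n^'n) ** (A - B) = X ** A - X ** B"
  by (simp add: matrix_matrix_mult_def vec_eq_iff right_diff_distrib sum_subtractf)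

lemma matrix_diff_rdistrib: "((A::'a::comm_ring_1^'n^'n) - B) ** X = A ** X - B ** X"
  by (simp add: matrix_matrix_mult_def vec_eq_iff left_diff_distrib sum_subtractf)

lemma ip_SucE:
  assumes "x \<in> ideal_pow I (Suc j)"
  obtains S f g where "finite (S::nat set)" "\<forall>i\<in>S. f i \<in> I \<and> g i \<in> ideal_pow I j"
    "x = (\<Sum>i\<in>S. f i * g i)"
proof -
  have "\<exists>(S::nat set) f g. finite S \<and> (\<forall>i\<in>S. f i \<in> I \<and> g i \<in> ideal_pow I j) \<and> x = (\<Sum>i\<in>S. f i * g i)"
    using assms by (simp only: ideal_pow.simps mem_Collect_eq)
  then obtain S f g where H: "finite (S::nat set) \<and> (\<forall>i\<in>S. f i \<in> I \<and> g i \<in> ideal_pow I j) \<and> x = (\<Sum>i\<in>S. f i * g i)"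
    by (elim exE)
  show ?thesis by (rule that[of S f g]) (use H in auto)
qed

lemma ip_SucI:
  assumes "finite (S::nat set)" "\<forall>i\<in>S. f i \<in> I \<and> g i \<in> ideal_pow I j"
    "x = (\<Sum>i\<in>S. f i * g i)"
  shows "x \<in> ideal_pow I (Suc j)"
  by (simp only: ideal_pow.simps mem_Collect_eq) (intro exI[of _ S] exI[of _ f] exI[of _ g] conjI; fact)

lemma ip_mult_left: "x \<in> ideal_pow I j \<Longrightarrow> (r::'a::comm_ring_1) * x \<in> ideal_pow I j"
proof (induction j arbitrary: x)
  case 0 then show ?case by simp
next
  case (Suc j)
  obtain S f g where S: "finite (S::nat set)" "\<forall>i\<in>S. f i \<in> I \<and> g i \<in> ideal_pow I j"
    and x: "x = (\<Sum>i\<in>S. f i * g i)" using Suc.prems by (rule ip_SucE)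
  have "r * x = (\<Sum>i\<in>S. f i * (r * g i))" by (simp add: x sum_distrib_left algebra_simps)
  moreover have "\<forall>i\<in>S. f i \<in> I \<and> r * g i \<in> ideal_pow I j" using S Suc.IH by blast
  ultimately show ?case using S(1) by (intro ip_SucI) auto
qed

lemma ip_mult: "x \<in> ideal_pow I a \<Longrightarrow> y \<in> ideal_pow I b \<Longrightarrow> (x::'a::comm_ring_1) * y \<in> ideal_pow I (a + b)"
proof (induction a arbitrary: x)
  case 0 then show ?case using ip_mult_left by simp
next
  case (Suc a)
  obtain S f g where S: "finite (S::nat set)" "\<forall>i\<in>S. f i \<in> I \<and> g i \<in> ideal_pow I a"
    and x: "x = (\<Sum>i\<in>S. f i * g i)" using Suc.prems(1) by (rule ip_SucE)
  have "x * y = (\<Sum>i\<in>S. f i * (g i * y))" by (simp add: x sum_distrib_right mult.assoc)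
  moreover have "\<forall>i\<in>S. f i \<in> I \<and> g i * y \<in> ideal_pow I (a + b)" using S Suc.IH Suc.prems(2) by blast
  ultimately show ?case using S(1) by (simp only: add_Suc) (intro ip_SucI; auto)
qed

lemma ip_zero: "(0::'a::comm_ring_1) \<in> ideal_pow I j"
  by (cases j) (auto intro!: ip_SucI[of "{}"])

lemma ip_add: "x \<in> ideal_pow I j \<Longrightarrow> y \<in> ideal_pow I j \<Longrightarrow> (x::'a::comm_ring_1) + y \<in> ideal_pow I j"
proof (cases j)
  case 0 then show ?thesis by simp
next
  case (Suc j')
  assume x: "x \<in> ideal_pow I j" and y: "y \<in> ideal_pow I j"
  obtain S f g where S: "finite (S::nat set)" "\<forall>i\<in>S. f i \<in> I \<and> g i \<in> ideal_pow I j'"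
    and xs: "x = (\<Sum>i\<in>S. f i * g i)" using x Suc by (auto elim: ip_SucE)
  obtain T f' g' where T: "finite (T::nat set)" "\<forall>i\<in>T. f' i \<in> I \<and> g' i \<in> ideal_pow I j'"
    and ys: "y = (\<Sum>i\<in>T. f' i * g' i)" using y Suc by (auto elim: ip_SucE)
  define U where "U = (\<lambda>i. 2*i) ` S \<union> (\<lambda>i. 2*i+1) ` T"
  define F where "F = (\<lambda>i::nat. if even i then f (i div 2) else f' (i div 2))"
  define G where "G = (\<lambda>i::nat. if even i then g (i div 2) else g' (i div 2))"
  have disj: "(\<lambda>i. 2*i) ` S \<inter> (\<lambda>i. 2*i+1) ` T = {}" by auto presburger
  have "(\<Sum>i\<in>U. F i * G i) = (\<Sum>i\<in>(\<lambda>i. 2*i) ` S. F i * G i) + (\<Sum>i\<in>(\<lambda>i. 2*i+1) ` T. F i * G i)"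
    unfolding U_def using S(1) T(1) disj by (intro sum.union_disjoint) auto
  also have "(\<Sum>i\<in>(\<lambda>i. 2*i) ` S. F i * G i) = x"
    by (subst sum.reindex) (auto simp: inj_on_def xs F_def G_def)
  also have "(\<Sum>i\<in>(\<lambda>i. 2*i+1) ` T. F i * G i) = y"
    by (subst sum.reindex) (auto simp: inj_on_def ys F_def G_def)
  finally have "x + y = (\<Sum>i\<in>U. F i * G i)" by simp
  moreover have "finite U" using S T by (simp add: U_def)
  moreover have "\<forall>i\<in>U. F i \<in> I \<and> G i \<in> ideal_pow I j'" using S T by (auto simp: U_def F_def G_def)
  ultimately show ?thesis using Suc by (auto intro: ip_SucI)
qed

lemma ip_uminus: "x \<in> ideal_pow I j \<Longrightarrow> - (x::'a::comm_ring_1) \<in> ideal_pow I j"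
  using ip_mult_left[of x I j "-1"] by simp

lemma ip_diff: "x \<in> ideal_pow I j \<Longrightarrow> y \<in> ideal_pow I j \<Longrightarrow> (x::'a::comm_ring_1) - y \<in> ideal_pow I j"
  using ip_add[of x I j "-y"] ip_uminus[of y I j] by simp

lemma ip_sum: "(\<And>i. i \<in> S \<Longrightarrow> f i \<in> ideal_pow I j) \<Longrightarrow> sum (f::_\<Rightarrow>'a::comm_ring_1) S \<in> ideal_pow I j"
proof (induction S rule: infinite_finite_induct)
  case (infinite A) then show ?case by (simp add: ip_zero)
next
  case empty then show ?case by (simp add: ip_zero)
next
  case (insert x F) then show ?case by (simp add: ip_add)
qed

lemma ip_Suc_sub: "x \<in> ideal_pow I (Suc j) \<Longrightarrow> (x::'a::comm_ring_1) \<in> ideal_pow I j"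
proof (induction j arbitrary: x)
  case 0 then show ?case by simp
next
  case (Suc j)
  obtain S f g where S: "finite (S::nat set)" "\<forall>i\<in>S. f i \<in> I \<and> g i \<in> ideal_pow I (Suc j)"
    and x: "x = (\<Sum>i\<in>S. f i * g i)" using Suc.prems by (rule ip_SucE)
  have "\<forall>i\<in>S. f i \<in> I \<and> g i \<in> ideal_pow I j" using S Suc.IH by blast
  then show ?case using S(1) x by (intro ip_SucI)
qed

lemma ip_mono: "i \<le> j \<Longrightarrow> x \<in> ideal_pow I j \<Longrightarrow> (x::'a::comm_ring_1) \<in> ideal_pow I i"
proof (induction j rule: dec_induct)
  case base then show ?case .
next
  case (step j) then show ?case using ip_Suc_sub by blast
qed

definition mI :: "'a::comm_ring_1 set \<Rightarrow> nat \<Rightarrow> 'a^'n^'m \<Rightarrow> bool" where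
  "mI I j X \<longleftrightarrow> (\<forall>i k. X $ i $ k \<in> ideal_pow I j)"

lemma mI_add: "mI I j X \<Longrightarrow> mI I j Y \<Longrightarrow> mI I j (X + Y)"
  by (simp add: mI_def ip_add)
lemma mI_diff: "mI I j X \<Longrightarrow> mI I j Y \<Longrightarrow> mI I j (X - Y)"
  by (simp add: mI_def ip_diff)
lemma mI_uminus: "mI I j X \<Longrightarrow> mI I j (- X)"
  by (simp add: mI_def ip_uminus)
lemma mI_zero: "mI I j 0"
  by (simp add: mI_def ip_zero)
lemma mI_mono: "i \<le> j \<Longrightarrow> mI I j X \<Longrightarrow> mI I i X"
  by (meson mI_def ip_mono)
lemma mI_mult: "mI I a (X::'a::comm_ring_1^'n^'n) \<Longrightarrow> mI I b Y \<Longrightarrow> mI I (a + b) (X ** Y)"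
  by (simp add: mI_def matrix_matrix_mult_def ip_sum ip_mult)
lemma mI_all0: "mI I 0 X" by (simp add: mI_def)
lemma mI_mult_left: "mI I b (Y::'a::comm_ring_1^'n^'n) \<Longrightarrow> mI I b (X ** Y)"
  by (simp add: mI_def matrix_matrix_mult_def ip_sum ip_mult_left)
lemma mI_mult_right: "mI I a (X::'a::comm_ring_1^'n^'n) \<Longrightarrow> mI I a (X ** Y)"
  by (simp add: mI_def matrix_matrix_mult_def ip_sum ip_mult_left mult.commute[of _ "Y $ _ $ _"])

lemma mI_poly: "mI I j ((X::'a::comm_ring_1^'n^'n) - Y) \<Longrightarrow> mI I j (poly_mat F X - poly_mat F Y)"
proof (induction F)
  case 0 then show ?case by (simp add: mI_zero)
next
  case (pCons a p)
  have "poly_mat (pCons a p) X - poly_mat (pCons a p) Y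
      = X ** (poly_mat p X - poly_mat p Y) + (X - Y) ** poly_mat p Y"
    by (simp add: poly_mat_pCons matrix_diff_ldistrib matrix_diff_rdistrib)
  then show ?case using pCons by (simp add: mI_add mI_mult_left mI_mult_right)
qed

locale redhom =
  fixes red :: "'a::comm_ring_1 \<Rightarrow> 'k::field"
  assumes radd[simp]: "\<And>x y. red (x + y) = red x + red y"
    and rmult[simp]: "\<And>x y. red (x * y) = red x * red y"
    and rone[simp]: "red 1 = 1"
begin

lemma r0[simp]: "red 0 = 0"
proof -
  have "red 0 = red 0 + red 0" using radd[of 0 0] by (simp only: add_0)
  then show ?thesis by (metis add_cancel_right_right)
qed

lemma rminus[simp]: "red (- x) = - red x"
proof -
  have "red x + red (-x) = 0" using radd[of x "-x"] by simp
  then show ?thesis by (rule minus_unique[symmetric])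
qed

lemma rdiff[simp]: "red (x - y) = red x - red y"
  using radd[of x "-y"] by simp

lemma rsum[simp]: "red (sum f S) = (\<Sum>i\<in>S. red (f i))"
  by (induction S rule: infinite_finite_induct) auto

lemma mm_add: "map_mat red (X + Y) = map_mat red X + map_mat red Y"
  by (simp add: map_mat_def vec_eq_iff)
lemma mm_diff: "map_mat red (X - Y) = map_mat red X - map_mat red Y"
  by (simp add: map_mat_def vec_eq_iff)
lemma mm_zero: "map_mat red 0 = 0"
  by (simp add: map_mat_def vec_eq_iff)
lemma mm_mult: "map_mat red (X ** Y) = map_mat red X ** map_mat red Y"
  by (simp add: map_mat_def vec_eq_iff matrix_matrix_mult_def)
lemma mm_mat: "map_mat red (mat c) = mat (red c)"
  by (simp add: map_mat_def vec_eq_iff mat_def)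

lemma mm_poly: "map_mat red (poly_mat p M) = poly_mat (map_poly red p) (map_mat red M)"
proof (induction p)
  case 0 then show ?case by (simp add: mm_zero)
next
  case (pCons a p)
  then show ?case by (simp add: map_poly_pCons poly_mat_pCons mm_add mm_mult mm_mat)
qed

lemma map_poly_red_add: "map_poly red (p + q) = map_poly red p + map_poly red q"
  by (rule poly_eqI) (simp add: coeff_map_poly)

lemma deriv_exists:
  "\<exists>F1. map_poly red F1 = pderiv (map_poly red F) \<and>
     (\<forall>g h. \<exists>Q. pcompose F (g + h) = pcompose F g + pcompose F1 g * h + h^2 * Q)"
proof (induction F)
  case 0
  have "map_poly red 0 = pderiv (map_poly red 0)" by simp
  moreover have "\<forall>g h. \<exists>Q. pcompose 0 (g + h) = pcompose 0 g + pcompose 0 g * h + h^2 * (Q::'a poly)"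
    by (auto intro: exI[of _ 0])
  ultimately show ?case by blast
next
  case (pCons a p)
  then obtain p1 where p1: "map_poly red p1 = pderiv (map_poly red p)"
    and T: "\<And>g h. \<exists>Q. pcompose p (g + h) = pcompose p g + pcompose p1 g * h + h^2 * Q" by blast
  have "map_poly red (p + pCons 0 p1) = pderiv (map_poly red (pCons a p))"
    by (simp add: map_poly_red_add map_poly_pCons p1 pderiv_pCons)
  moreover have "\<exists>Q. pcompose (pCons a p) (g + h) = pcompose (pCons a p) g + pcompose (p + pCons 0 p1) g * h + h^2 * Q" for g h
  proof -
    obtain Q where Q: "pcompose p (g + h) = pcompose p g + pcompose p1 g * h + h^2 * Q" using T by blast
    have "pcompose (pCons a p) (g + h) = pcompose (pCons a p) g + pcompose (p + pCons 0 p1) g * h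
       + h^2 * (pcompose p1 g + (g + h) * Q)"
      by (simp add: pcompose_pCons pcompose_add Q algebra_simps power2_eq_square)
    then show ?thesis by blast
  qed
  ultimately show ?case by blast
qed

lemma lift_poly: "surj red \<Longrightarrow> \<exists>p. map_poly red p = pb"
proof (induction pb)
  case 0 then show ?case by (intro exI[of _ 0]) simp
next
  case (pCons a pb)
  then obtain p where p: "map_poly red p = pb" by blast
  have a: "red (inv red a) = a" using pCons.prems by (rule surj_f_inv_f)
  have "map_poly red (pCons (inv red a) p) = pCons a pb"
    by (simp only: map_poly_pCons[of red, OF r0] p a)
  then show ?case by blast
qed

lemma ip1: "red x = 0 \<Longrightarrow> x \<in> ideal_pow {x. red x = 0} (Suc 0)"
  by (rule ip_SucI[where S="{0}" and f="\<lambda>_. x" and g="\<lambda>_. 1"]) auto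

lemma ip1_red: "x \<in> ideal_pow {x. red x = 0} (Suc j) \<Longrightarrow> red x = 0"
  by (erule ip_SucE) simp

lemma mI1: "mI {x. red x = 0} (Suc 0) X \<longleftrightarrow> map_mat red X = 0"
proof
  assume "mI {x. red x = 0} (Suc 0) X"
  then have "red (X $ i $ k) = 0" for i k unfolding mI_def using ip1_red by blast
  then show "map_mat red X = 0" by (simp add: map_mat_def vec_eq_iff)
next
  assume "map_mat red X = 0"
  then have "red (X $ i $ k) = 0" for i k by (simp add: map_mat_def vec_eq_iff)
  then show "mI {x. red x = 0} (Suc 0) X" unfolding mI_def using ip1 by blast
qed

end



lemma newton_alg:
  fixes P F1g c Q X :: "'b::comm_ring_1"
  shows "P + F1g * (- (c * (P - X))) + (- (c * (P - X)))^2 * Q - X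
       = (1 - F1g * c) * (P - X) + (P - X) * (P - X) * (c * c * Q)"
  by (simp add: algebra_simps power2_eq_square)

theorem theorem2p4:
  fixes red :: "'a::comm_ring_1 \<Rightarrow> 'k::field"
    and A :: "'a^'n^'n" and F :: "'a poly" and d :: nat and Bt :: "'k^'n^'n"
  assumes red_add: "\<And>x y. red (x + y) = red x + red y"
    and red_mult: "\<And>x y. red (x * y) = red x * red y"
    and red_one: "red 1 = 1"
    and red_surj: "surj red"
    and local: "local_ring_with {x. red x = 0}"
    and pir: "principal_ideal_ring TYPE('a)"
    and complete: "complete_wrt {x. red x = 0}"
    and char: "(2::'k) \<noteq> 0"
    and cyclic: "cyclic_mat (map_mat red A)"
    and monic: "lead_coeff F = 1"
    and deg: "degree F = d"
    and root: "poly_mat (map_poly red F) Bt = map_mat red A"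
    and unit: "invertible (poly_mat (pderiv (map_poly red F)) Bt)"
  shows "\<exists>B::'a^'n^'n. map_mat red B = Bt \<and> poly_mat F B = A"
proof -
  interpret redhom red using red_add red_mult red_one by unfold_locales auto
  let ?m = "{x. red x = 0}"
  let ?Ab = "map_mat red A"
  let ?N = "poly_mat (pderiv (map_poly red F)) Bt"
  obtain D where ND: "?N ** D = mat 1" and DN: "D ** ?N = mat 1"
    using unit unfolding invertible_def by blast
  have BA: "Bt ** ?Ab = ?Ab ** Bt"
    unfolding root[symmetric] by (rule poly_mat_comm_M[symmetric])
  have NA: "?N ** ?Ab = ?Ab ** ?N"
    unfolding root[symmetric] by (rule poly_mat_comm)
  have DA: "D ** ?Ab = ?Ab ** D"
  proof -
    have "D ** ?Ab = D ** (?Ab ** (?N ** D))" by (simp add: ND)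
    also have "\<dots> = D ** ((?Ab ** ?N) ** D)" by (simp add: matrix_mul_assoc)
    also have "\<dots> = D ** ((?N ** ?Ab) ** D)" by (simp add: NA)
    also have "\<dots> = ((D ** ?N) ** ?Ab) ** D" by (simp add: matrix_mul_assoc)
    also have "\<dots> = ?Ab ** D" by (simp add: DN)
    finally show ?thesis .
  qed
  obtain qb where qb: "Bt = poly_mat qb ?Ab" using centralizer_cyclic[OF cyclic BA] by blast
  obtain cb where cb: "D = poly_mat cb ?Ab" using centralizer_cyclic[OF cyclic DA] by blast
  obtain q where q: "map_poly red q = qb" using lift_poly[OF red_surj] by blast
  obtain c where c: "map_poly red c = cb" using lift_poly[OF red_surj] by blast
  have q_red: "map_mat red (poly_mat q A) = Bt" by (simp add: mm_poly q qb)
  have c_red: "map_mat red (poly_mat c A) = D" by (simp add: mm_poly c cb)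
  obtain F1 where F1: "map_poly red F1 = pderiv (map_poly red F)"
    and tay: "\<And>g h. \<exists>Q. pcompose F (g + h) = pcompose F g + pcompose F1 g * h + h^2 * Q"
    using deriv_exists[of F] by blast
  define X :: "'a poly" where "X = [:0, 1:]"
  define E where "E = (\<lambda>g. pcompose F g - X)"
  define g where "g = rec_nat q (\<lambda>_ gj. gj - c * E gj)"
  have g0: "g 0 = q" by (simp add: g_def)
  have gS: "g (Suc j) = g j - c * E (g j)" for j by (simp add: g_def)
  have phiE: "poly_mat (E p) A = poly_mat F (poly_mat p A) - A" for p
    by (simp add: E_def poly_mat_diff poly_mat_pcompose X_def poly_mat_X)
  have mm1: "map_mat red (mat 1 :: 'a^'n^'n) = mat 1" by (simp add: mm_mat)
  have inv: "map_mat red (poly_mat (g j) A) = Bt \<and> mI ?m (Suc j) (poly_mat (E (g j)) A)" for j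
  proof (induction j)
    case 0
    have "map_mat red (poly_mat F (poly_mat q A)) = poly_mat (map_poly red F) (map_mat red (poly_mat q A))"
      by (rule mm_poly)
    then have "map_mat red (poly_mat (E q) A) = 0"
      by (simp add: phiE mm_diff q_red root)
    then show ?case by (simp add: g0 q_red mI1)
  next
    case (Suc j)
    then have red_g: "map_mat red (poly_mat (g j) A) = Bt"
      and mE: "mI ?m (Suc j) (poly_mat (E (g j)) A)" by auto
    define e where "e = E (g j)"
    define h where "h = - (c * e)"
    obtain Q where Q: "pcompose F (g j + h) = pcompose F (g j) + pcompose F1 (g j) * h + h^2 * Q"
      using tay by blast
    have gSuc: "g (Suc j) = g j + h" by (simp add: gS h_def e_def)
    have ES: "E (g (Suc j)) = (1 - pcompose F1 (g j) * c) * e + e * e * (c * c * Q)"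
    proof -
      have "E (g (Suc j)) = pcompose F (g j + h) - X" by (simp add: E_def gSuc)
      also have "\<dots> = pcompose F (g j) + pcompose F1 (g j) * h + h^2 * Q - X" by (simp only: Q)
      also have "\<dots> = (1 - pcompose F1 (g j) * c) * e + e * e * (c * c * Q)"
        unfolding h_def e_def E_def by (rule newton_alg)
      finally show ?thesis .
    qed
    have red_e: "map_mat red (poly_mat e A) = 0"
    proof -
      have "mI ?m (Suc 0) (poly_mat e A)" using mE mI_mono[of "Suc 0" "Suc j"] by (simp add: e_def)
      then show ?thesis by (simp only: mI1)
    qed
    have "map_mat red (poly_mat F1 (poly_mat (g j) A)) = poly_mat (map_poly red F1) (map_mat red (poly_mat (g j) A))"
      by (rule mm_poly)
    then have red_F1: "map_mat red (poly_mat (pcompose F1 (g j)) A) = ?N"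
      by (simp add: poly_mat_pcompose red_g F1)
    have m1: "mI ?m (Suc 0) (poly_mat (1 - pcompose F1 (g j) * c) A)"
      unfolding mI1 by (simp add: poly_mat_diff poly_mat_mult poly_mat_one mm_diff mm_mult mm1 red_F1 c_red ND)
    have t1: "mI ?m (Suc (Suc j)) (poly_mat ((1 - pcompose F1 (g j) * c) * e) A)"
      using mI_mult[OF m1 mE] by (simp add: poly_mat_mult e_def)
    have "mI ?m (Suc j + Suc j) (poly_mat (e * e * (c * c * Q)) A)"
    proof -
      have "poly_mat (e * e * (c * c * Q)) A = (poly_mat e A ** poly_mat e A) ** poly_mat (c * c * Q) A"
        by (simp only: poly_mat_mult)
      then show ?thesis using mI_mult_right[OF mI_mult[OF mE mE]] by (simp add: e_def)
    qed
    then have t2: "mI ?m (Suc (Suc j)) (poly_mat (e * e * (c * c * Q)) A)"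
      by (rule mI_mono[rotated]) simp
    have "mI ?m (Suc (Suc j)) (poly_mat (E (g (Suc j))) A)"
      unfolding ES poly_mat_add using t1 t2 by (rule mI_add)
    moreover have "map_mat red (poly_mat (g (Suc j)) A) = Bt"
      by (simp add: gS poly_mat_diff poly_mat_mult mm_diff mm_mult red_g red_e[unfolded e_def])
    ultimately show ?case by simp
  qed
  have step: "mI ?m (Suc j) (poly_mat (g (Suc j)) A - poly_mat (g j) A)" for j
  proof -
    have "poly_mat (g (Suc j)) A - poly_mat (g j) A = - (poly_mat c A ** poly_mat (E (g j)) A)"
      by (simp add: gS poly_mat_diff poly_mat_mult)
    then show ?thesis using inv[of j] by (simp add: mI_uminus mI_mult_left)
  qed
  from complete have sep: "\<And>x. (\<forall>j. x \<in> ideal_pow ?m j) \<Longrightarrow> x = 0"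
    and lim: "\<And>s. (\<forall>j. s (Suc j) - s j \<in> ideal_pow ?m j) \<Longrightarrow> \<exists>y. \<forall>j. y - s j \<in> ideal_pow ?m j"
    unfolding complete_wrt_def by blast+
  define Y where "Y = (\<lambda>i k. SOME y. \<forall>j. y - poly_mat (g j) A $ i $ k \<in> ideal_pow ?m j)"
  have Y: "\<forall>j. Y i k - poly_mat (g j) A $ i $ k \<in> ideal_pow ?m j" for i k
  proof -
    have "\<exists>y. \<forall>j. y - poly_mat (g j) A $ i $ k \<in> ideal_pow ?m j"
    proof (rule lim, rule allI)
      fix j
      have "(poly_mat (g (Suc j)) A - poly_mat (g j) A) $ i $ k \<in> ideal_pow ?m (Suc j)"
        using step[of j] unfolding mI_def by blast
      then have "(poly_mat (g (Suc j)) A - poly_mat (g j) A) $ i $ k \<in> ideal_pow ?m j"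
        by (rule ip_Suc_sub)
      then show "poly_mat (g (Suc j)) A $ i $ k - poly_mat (g j) A $ i $ k \<in> ideal_pow ?m j"
        by (simp only: vector_minus_component)
    qed
    then show ?thesis unfolding Y_def by (rule someI_ex)
  qed
  define B :: "'a^'n^'n" where "B = (\<chi> i k. Y i k)"
  have Bj: "mI ?m j (B - poly_mat (g j) A)" for j
    unfolding mI_def
  proof (intro allI)
    fix i k
    have "(B - poly_mat (g j) A) $ i $ k = Y i k - poly_mat (g j) A $ i $ k" by (simp add: B_def)
    then show "(B - poly_mat (g j) A) $ i $ k \<in> ideal_pow ?m j" using Y[of i k] by simp
  qed
  have "mI ?m (Suc 0) (B - poly_mat (g (Suc 0)) A)" by (rule Bj)
  then have "map_mat red (B - poly_mat (g (Suc 0)) A) = 0" by (simp only: mI1)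
  then have redB: "map_mat red B = Bt"
    using inv[of "Suc 0"] by (simp add: mm_diff)
  have FB: "mI ?m j (poly_mat F B - A)" for j
  proof -
    have "poly_mat F B - A = (poly_mat F B - poly_mat F (poly_mat (g j) A)) + poly_mat (E (g j)) A"
      by (simp add: phiE)
    moreover have "mI ?m j (poly_mat F B - poly_mat F (poly_mat (g j) A))"
      by (rule mI_poly[OF Bj])
    moreover have "mI ?m j (poly_mat (E (g j)) A)"
      by (rule mI_mono[of j "Suc j"]) (use inv[of j] in auto)
    ultimately show ?thesis by (metis mI_add)
  qed
  have "(poly_mat F B - A) $ i $ k = 0" for i k
  proof (rule sep, rule allI)
    fix j show "(poly_mat F B - A) $ i $ k \<in> ideal_pow ?m j" using FB[of j] unfolding mI_def by blast
  qed
  then have "poly_mat F B - A = 0" by (simp add: vec_eq_iff)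
  then show ?thesis using redB by auto
qed

end
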